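(* Let $(X,f)$, $(Y,g)$ be dynamical systems, $\pi\colon(X,f)\to(Y,g)$ a factor map such that $\pi^{-1}(y)$ is at most countable for every $y\in Y$, and let $z_1,z_2\in X$ with $\pi(z_1)\ne\pi(z_2)$. Let $\varepsilon=d(\pi(z_1),\pi(z_2))/3$ and let $\delta>0$ be such that $d(a,b)<\delta$ implies $d(\pi(a),\pi(b))<\varepsilon$ for $a,b\in X$. Suppose $S\subset X$ is a dense Mycielski syndetically scrambled set for $f$ such that for any two distinct $x_1,x_2\in S$ there is an infinite set $M\subset\mathbb N$ with $d(z_i,f^n(x_i))<\delta$ for $i=1,2$ and all $n\in M$. Then $g$ has a dense Mycielski syndetically $\varepsilon$-scrambled set $T\subset\pi(S)$. Moreover, if $f^k(S)\subset S$ for some $k\in\mathbb N$, then $T$ may be chosen with $g^k(T)\subset T$.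
   Context: Dynamical system: compact metric space with continuous self-map. Factor map: continuous surjection $\pi$ with $\pi\circ f=g\circ\pi$. Syndetic: subset of $\mathbb N$ meeting every set with arbitrarily long runs of consecutive integers. $\mathrm{Asy}$ and $\mathrm{SProx}$: pairs with $d(f^nx,f^ny)\to0$, resp. with $\{n:d(f^nx,f^ny)<\eta\}$ syndetic for all $\eta>0$. A set with at least two points is syndetically scrambled if all distinct pairs lie in $\mathrm{SProx}\setminus\mathrm{Asy}$; syndetically $\varepsilon$-scrambled if moreover $\limsup_n d(g^nx,g^ny)\ge\varepsilon$ for all distinct pairs. Mycielski set: countable union of Cantor sets. *)

theory Defs
  imports "HOL-Analysis.Analysis"
begin

definition dyn_sys :: "('a::metric_space \<Rightarrow> 'a) \<Rightarrow> bool" where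
  "dyn_sys f \<longleftrightarrow> compact (UNIV :: 'a set) \<and> continuous_on UNIV f"

definition factor_map ::
  "('a::metric_space \<Rightarrow> 'a) \<Rightarrow> ('b::metric_space \<Rightarrow> 'b) \<Rightarrow> ('a \<Rightarrow> 'b) \<Rightarrow> bool" where
  "factor_map f g p \<longleftrightarrow> continuous_on UNIV p \<and> surj p \<and> p \<circ> f = g \<circ> p"

definition syndetic :: "nat set \<Rightarrow> bool" where
  "syndetic A \<longleftrightarrow> (\<forall>B. (\<forall>L. \<exists>m. {m..<m+L} \<subseteq> B) \<longrightarrow> A \<inter> B \<noteq> {})"

definition Asy :: "('a::metric_space \<Rightarrow> 'a) \<Rightarrow> ('a \<times> 'a) set" where
  "Asy f = {(x, y). (\<lambda>n. dist ((f ^^ n) x) ((f ^^ n) y)) \<longlonglongrightarrow> 0}"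

definition SProx :: "('a::metric_space \<Rightarrow> 'a) \<Rightarrow> ('a \<times> 'a) set" where
  "SProx f = {(x, y). \<forall>\<eta>>0. syndetic {n. dist ((f ^^ n) x) ((f ^^ n) y) < \<eta>}}"

definition synd_scrambled :: "('a::metric_space \<Rightarrow> 'a) \<Rightarrow> 'a set \<Rightarrow> bool" where
  "synd_scrambled f S \<longleftrightarrow> (\<exists>x\<in>S. \<exists>y\<in>S. x \<noteq> y) \<and>
     (\<forall>x\<in>S. \<forall>y\<in>S. x \<noteq> y \<longrightarrow> (x, y) \<in> SProx f - Asy f)"

definition synd_eps_scrambled :: "('a::metric_space \<Rightarrow> 'a) \<Rightarrow> real \<Rightarrow> 'a set \<Rightarrow> bool" where
  "synd_eps_scrambled f \<epsilon> S \<longleftrightarrow> synd_scrambled f S \<and>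
     (\<forall>x\<in>S. \<forall>y\<in>S. x \<noteq> y \<longrightarrow>
        limsup (\<lambda>n. ereal (dist ((f ^^ n) x) ((f ^^ n) y))) \<ge> ereal \<epsilon>)"

definition cantor_ternary :: "real set" where
  "cantor_ternary = {x. \<exists>a::nat \<Rightarrow> real. (\<forall>n. a n \<in> {0, 2}) \<and> x = (\<Sum>n. a n / 3 ^ (Suc n))}"

definition cantor_set :: "'a::metric_space set \<Rightarrow> bool" where
  "cantor_set C \<longleftrightarrow> C homeomorphic cantor_ternary"

definition mycielski :: "'a::metric_space set \<Rightarrow> bool" where
  "mycielski S \<longleftrightarrow> (\<exists>\<C>. countable \<C> \<and> (\<forall>C\<in>\<C>. cantor_set C) \<and> S = \<Union>\<C>)"

end

theory Submission imports Defs begin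
lemma cantor_compact: "compact cantor_ternary"
proof -
  define A where "A = PiE (UNIV::nat set) (\<lambda>_. {0::real,2})"
  define \<phi> where "\<phi> = (\<lambda>a::nat\<Rightarrow>real. \<Sum>n. a n / 3^Suc n)"
  have cA: "compact A"
  proof -
    have "compactin (product_topology (\<lambda>_. euclidean) UNIV) A"
      unfolding A_def by (subst compactin_PiE) auto
    then show ?thesis by (simp add: euclidean_product_topology)
  qed
  have sm: "summable (\<lambda>i::nat. 2 / 3 ^ Suc i :: real)"
  proof -
    have "summable (\<lambda>i::nat. (2/3) * (1/3::real)^i)"
      by (intro summable_mult summable_geometric) simp
    moreover have "(\<lambda>i::nat. 2 / 3 ^ Suc i :: real) = (\<lambda>i::nat. (2/3) * (1/3::real)^i)"
      by (auto simp: power_one_over field_simps)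
    ultimately show ?thesis by simp
  qed
  have ul: "uniform_limit A (\<lambda>n a. \<Sum>i<n. a i / 3^Suc i) (\<lambda>a. suminf (\<lambda>i. a i / 3^Suc i)) sequentially"
    by (rule Weierstrass_m_test[OF _ sm]) (auto simp: A_def PiE_def Pi_def intro!: divide_right_mono; metis abs_zero abs_numeral order_refl zero_le_numeral)
  have "continuous_on A \<phi>"
    unfolding \<phi>_def
    by (rule uniform_limit_theorem[OF _ ul]) (auto intro!: always_eventually continuous_intros continuous_on_subset[OF continuous_on_product_coordinates])
  moreover have "cantor_ternary = \<phi> ` A"
    unfolding cantor_ternary_def \<phi>_def A_def PiE_def Pi_def by auto
  ultimately show ?thesis using cA compact_continuous_image by metis
qed

lemma iter_comm:
  assumes "p \<circ> f = g \<circ> p"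
  shows "(g^^n) (p x) = p ((f^^n) x)"
proof (induction n)
  case (Suc n)
  have "\<And>y. g (p y) = p (f y)" using assms by (metis comp_apply)
  then show ?case using Suc by simp
qed simp

lemma syndetic_mono: "syndetic A \<Longrightarrow> A \<subseteq> B \<Longrightarrow> syndetic B"
  unfolding syndetic_def by blast

lemma limsup_ge:
  fixes X :: "nat \<Rightarrow> ereal"
  assumes "infinite M" "\<forall>n\<in>M. c \<le> X n"
  shows "c \<le> limsup X"
  unfolding limsup_INF_SUP
proof (rule INF_greatest)
  fix n :: nat
  obtain m where "m \<ge> n" "m \<in> M" using assms(1) infinite_nat_iff_unbounded_le by blast
  then show "c \<le> (SUP m\<in>{n..}. X m)"
    using assms(2) by (meson SUP_upper2 atLeast_iff)
qed

theorem proposition3p18: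
  fixes f :: "'a::metric_space \<Rightarrow> 'a" and g :: "'b::metric_space \<Rightarrow> 'b"
    and p :: "'a \<Rightarrow> 'b" and z1 z2 :: 'a and \<epsilon> \<delta> :: real and S :: "'a set"
  assumes "dyn_sys f" and "dyn_sys g" and "factor_map f g p"
    and "\<forall>y. countable (p -` {y})"
    and "p z1 \<noteq> p z2"
    and "\<epsilon> = dist (p z1) (p z2) / 3"
    and "\<delta> > 0" and "\<forall>a b. dist a b < \<delta> \<longrightarrow> dist (p a) (p b) < \<epsilon>"
    and "closure S = UNIV" and "mycielski S" and "synd_scrambled f S"
    and "\<forall>x1\<in>S. \<forall>x2\<in>S. x1 \<noteq> x2 \<longrightarrow>
           (\<exists>M::nat set. infinite M \<and>
              (\<forall>n\<in>M. dist z1 ((f ^^ n) x1) < \<delta> \<and> dist z2 ((f ^^ n) x2) < \<delta>))"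
  shows "(\<exists>T. T \<subseteq> p ` S \<and> closure T = UNIV \<and> mycielski T \<and> synd_eps_scrambled g \<epsilon> T)
    \<and> (\<forall>k::nat. (f ^^ k) ` S \<subseteq> S \<longrightarrow>
         (\<exists>T. T \<subseteq> p ` S \<and> closure T = UNIV \<and> mycielski T \<and> synd_eps_scrambled g \<epsilon> T
              \<and> (g ^^ k) ` T \<subseteq> T))"
proof -
  have fm: "continuous_on UNIV p" "surj p" "p \<circ> f = g \<circ> p"
    using assms(3) unfolding factor_map_def by auto
  have comm: "\<And>n x. (g^^n) (p x) = p ((f^^n) x)"
    using iter_comm[OF fm(3)] by blast
  have eps: "\<epsilon> > 0" proof -
    have "dist (p z1) (p z2) > 0" using assms(5) by simp
    then show ?thesis using assms(6) by linarith
  qed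
  have sep: "\<exists>M. infinite M \<and> (\<forall>n\<in>M. \<epsilon> < dist ((g^^n) (p x1)) ((g^^n) (p x2)))"
    if xs: "x1 \<in> S" "x2 \<in> S" "x1 \<noteq> x2" for x1 x2
  proof -
    obtain M where M: "infinite M"
      "\<forall>n\<in>M. dist z1 ((f ^^ n) x1) < \<delta> \<and> dist z2 ((f ^^ n) x2) < \<delta>"
      using assms(12)[rule_format, OF xs] by blast
    have "\<epsilon> < dist ((g^^n) (p x1)) ((g^^n) (p x2))" if "n \<in> M" for n
    proof -
      define a where "a = (f^^n) x1"
      define b where "b = (f^^n) x2"
      have d1: "dist z1 a < \<delta>" using M(2) that unfolding a_def by blast
      have d2: "dist z2 b < \<delta>" using M(2) that unfolding b_def by blast
      have 1: "dist (p z1) (p a) < \<epsilon>" using assms(8)[rule_format, OF d1] .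
      have 2: "dist (p z2) (p b) < \<epsilon>" using assms(8)[rule_format, OF d2] .
      have 3: "dist (p b) (p z2) = dist (p z2) (p b)" by (rule dist_commute)
      have t1: "dist (p z1) (p z2) \<le> dist (p z1) (p a) + dist (p a) (p z2)" by (rule dist_triangle)
      have t2: "dist (p a) (p z2) \<le> dist (p a) (p b) + dist (p b) (p z2)" by (rule dist_triangle)
      have "dist (p z1) (p z2) \<le> dist (p z1) (p a) + dist (p a) (p b) + dist (p b) (p z2)"
        using t1 t2 by linarith
      then have "3 * \<epsilon> < \<epsilon> + dist (p a) (p b) + \<epsilon>"
        using 1 2 3 assms(6) by linarith
      moreover have "dist (p a) (p b) = dist ((g^^n) (p x1)) ((g^^n) (p x2))"
        unfolding a_def b_def comm ..
      ultimately show ?thesis by linarith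
    qed
    then show ?thesis using M(1) by blast
  qed
  have inj: "inj_on p S"
  proof (rule inj_onI)
    fix x y assume xy: "x \<in> S" "y \<in> S" "p x = p y"
    show "x = y"
    proof (rule ccontr)
      assume "x \<noteq> y"
      then obtain M where M: "infinite M" "\<forall>n\<in>M. \<epsilon> < dist ((g^^n) (p x)) ((g^^n) (p y))"
        using sep xy by blast
      then obtain n where "n \<in> M" by (metis ex_in_conv finite.emptyI)
      then show False using M xy eps by simp
    qed
  qed
  have uc: "uniformly_continuous_on UNIV p"
    using assms(1) fm(1) unfolding dyn_sys_def by (simp add: compact_uniformly_continuous)
  have dense: "closure (p ` S) = UNIV"
  proof -
    have "p ` closure S \<subseteq> closure (p ` S)"
      by (rule image_closure_subset[OF continuous_on_subset[OF fm(1)]]) (simp_all add: closure_subset)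
    then show ?thesis using assms(9) fm(2) by auto
  qed
  have myc: "mycielski (p ` S)"
  proof -
    obtain \<C> where C: "countable \<C>" "\<forall>C\<in>\<C>. cantor_set C" "S = \<Union>\<C>"
      using assms(10) unfolding mycielski_def by blast
    have "cantor_set (p ` C)" if "C \<in> \<C>" for C
    proof -
      have h: "C homeomorphic cantor_ternary" using C(2) that unfolding cantor_set_def by blast
      then have "compact C" using homeomorphic_compactness cantor_compact by blast
      moreover have "inj_on p C" using inj C(3) that by (meson Sup_upper inj_on_subset)
      ultimately have "C homeomorphic p ` C"
        by (intro homeomorphic_compact) (auto intro: continuous_on_subset[OF fm(1)])
      then show ?thesis using h unfolding cantor_set_def
        by (meson homeomorphic_sym homeomorphic_trans)
    qed
    then show ?thesis unfolding mycielski_def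
      by (intro exI[of _ "(image p) ` \<C>"]) (auto simp: C(1) C(3))
  qed
  have scr: "synd_eps_scrambled g \<epsilon> (p ` S)"
  proof -
    have pair: "(u, v) \<in> SProx g - Asy g \<and>
        limsup (\<lambda>n. ereal (dist ((g ^^ n) u) ((g ^^ n) v))) \<ge> ereal \<epsilon>"
      if uv: "u \<in> p ` S" "v \<in> p ` S" "u \<noteq> v" for u v
    proof -
      obtain x1 x2 where x: "x1 \<in> S" "x2 \<in> S" "u = p x1" "v = p x2" using uv(1,2) by blast
      then have "x1 \<noteq> x2" using uv(3) by blast
      then obtain M where M: "infinite M" "\<forall>n\<in>M. \<epsilon> < dist ((g^^n) u) ((g^^n) v)"
        using sep x by blast
      have sp: "(x1, x2) \<in> SProx f" using assms(11) x \<open>x1 \<noteq> x2\<close>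
        unfolding synd_scrambled_def by blast
      have "(u, v) \<in> SProx g"
        unfolding SProx_def mem_Collect_eq case_prod_conv
      proof (intro allI impI)
        fix \<eta> :: real assume "\<eta> > 0"
        then obtain d where d: "d > 0" "\<forall>x\<in>UNIV. \<forall>x'\<in>UNIV. dist x' x < d \<longrightarrow> dist (p x') (p x) < \<eta>"
          using uc unfolding uniformly_continuous_on_def by blast
        have "syndetic {n. dist ((f ^^ n) x1) ((f ^^ n) x2) < d}"
          using sp d(1) unfolding SProx_def by blast
        moreover have "{n. dist ((f ^^ n) x1) ((f ^^ n) x2) < d} \<subseteq> {n. dist ((g ^^ n) u) ((g ^^ n) v) < \<eta>}"
        proof
          fix n assume "n \<in> {n. dist ((f ^^ n) x1) ((f ^^ n) x2) < d}"
          then have "dist (p ((f ^^ n) x1)) (p ((f ^^ n) x2)) < \<eta>" using d(2) by blast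
          then show "n \<in> {n. dist ((g ^^ n) u) ((g ^^ n) v) < \<eta>}" using x comm by simp
        qed
        ultimately show "syndetic {n. dist ((g ^^ n) u) ((g ^^ n) v) < \<eta>}" by (rule syndetic_mono)
      qed
      moreover have "(u, v) \<notin> Asy g"
      proof
        assume "(u, v) \<in> Asy g"
        then have "(\<lambda>n. dist ((g ^^ n) u) ((g ^^ n) v)) \<longlonglongrightarrow> 0" unfolding Asy_def by simp
        then have "eventually (\<lambda>n. dist ((g ^^ n) u) ((g ^^ n) v) < \<epsilon>) sequentially"
          using eps order_tendstoD(2) by blast
        then obtain N where N: "\<forall>n\<ge>N. dist ((g ^^ n) u) ((g ^^ n) v) < \<epsilon>"
          unfolding eventually_sequentially by blast
        obtain m where "m \<ge> N" "m \<in> M" using M(1) infinite_nat_iff_unbounded_le by blast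
        then have "dist ((g ^^ m) u) ((g ^^ m) v) < \<epsilon>" using N by blast
        moreover have "\<epsilon> < dist ((g ^^ m) u) ((g ^^ m) v)" using M(2) \<open>m \<in> M\<close> by blast
        ultimately show False by linarith
      qed
      moreover have "limsup (\<lambda>n. ereal (dist ((g ^^ n) u) ((g ^^ n) v))) \<ge> ereal \<epsilon>"
        by (rule limsup_ge[OF M(1)]) (use M(2) in auto)
      ultimately show ?thesis by blast
    qed
    obtain x y where "x \<in> S" "y \<in> S" "x \<noteq> y" using assms(11) unfolding synd_scrambled_def by blast
    then have "\<exists>x\<in>p ` S. \<exists>y\<in>p ` S. x \<noteq> y" using inj inj_on_contraD by fastforce
    then show ?thesis unfolding synd_eps_scrambled_def synd_scrambled_def using pair by blast
  qed
  show ?thesis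
  proof
    show "\<exists>T. T \<subseteq> p ` S \<and> closure T = UNIV \<and> mycielski T \<and> synd_eps_scrambled g \<epsilon> T"
      using dense myc scr by blast
    show "\<forall>k::nat. (f ^^ k) ` S \<subseteq> S \<longrightarrow>
         (\<exists>T. T \<subseteq> p ` S \<and> closure T = UNIV \<and> mycielski T \<and> synd_eps_scrambled g \<epsilon> T
              \<and> (g ^^ k) ` T \<subseteq> T)"
    proof (intro allI impI)
      fix k :: nat assume k: "(f ^^ k) ` S \<subseteq> S"
      have "(g ^^ k) ` p ` S \<subseteq> p ` S"
      proof
        fix y assume "y \<in> (g ^^ k) ` p ` S"
        then obtain x where "x \<in> S" "y = p ((f^^k) x)" using comm by auto
        then show "y \<in> p ` S" using k by blast
      qed
      then show "\<exists>T. T \<subseteq> p ` S \<and> closure T = UNIV \<and> mycielski T \<and> synd_eps_scrambled g \<epsilon> T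
              \<and> (g ^^ k) ` T \<subseteq> T" using dense myc scr by blast
    qed
  qed
qed

end
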